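(* Let $c$ and $\gamma$ be constants, $\mathcal{Y}$ a tiny class, and $t:\mathbb{N}\to\mathbb{R}$ an increasing unbounded function with $t(n)\le n$ for all $n$. Let $L\subseteq\mathbb{N}$ be an infinite $t$-sparse set, and for every $\ell\in L$ let $\mathcal{M}_\ell$ be a set of $\ell$-vertex monotone $(c,\mathcal{Y},t)$-tiny graphs with $|\mathcal{M}_\ell|\le\gamma^{t(\ell)}$. Then $\mathrm{Mon}\big(\bigcup_{\ell\in L}\mathcal{M}_\ell\big)$ is a monotone tiny class.
   Context: A class (set of graphs closed under isomorphism) is monotone if closed under subgraphs; it is tiny if hereditary (closed under induced subgraphs) and for some constant $\beta$ it contains at most $\beta^n$ unlabeled $n$-vertex graphs for every $n$. $\mathrm{Mon}(\mathcal{C})$ is the smallest monotone class containing $\mathcal{C}$. $L$ is $t$-sparse if there is no pair $x\ne y$ in $L$ with $t(y)\le x\le y$. For a graph $G$, $s_k(G)$ is the number of unlabeled $k$-vertex subgraphs of $G$. An $n$-vertex graph $G$ is monotone $(c,\mathcal{Y},t)$-tiny if (1) for every integer $1\le k\le t(n)$, every $k$-vertex subgraph of $G$ belongs to $\mathcal{Y}$, and (2) for every integer $t(n)<k\le n$, $s_k(G)\le c^k$. *)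

theory Defs
  imports Complex_Main
begin

text \<open>Finite simple graphs: a pair (V, E) of a finite vertex set V of naturals and
a set E of 2-element subsets of V.\<close>
type_synonym graph = "nat set \<times> nat set set"

definition wf_graph :: "graph \<Rightarrow> bool" where
  "wf_graph G \<longleftrightarrow> finite (fst G) \<and>
     snd G \<subseteq> {e. \<exists>x y. x \<noteq> y \<and> x \<in> fst G \<and> y \<in> fst G \<and> e = {x, y}}"

definition nverts :: "graph \<Rightarrow> nat" where
  "nverts G = card (fst G)"

definition graph_iso :: "graph \<Rightarrow> graph \<Rightarrow> bool" where
  "graph_iso G H \<longleftrightarrow> (\<exists>f. bij_betw f (fst G) (fst H) \<and>
     (\<forall>x\<in>fst G. \<forall>y\<in>fst G. {x, y} \<in> snd G \<longleftrightarrow> {f x, f y} \<in> snd H))"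

definition subgraph :: "graph \<Rightarrow> graph \<Rightarrow> bool" where
  "subgraph H G \<longleftrightarrow> wf_graph H \<and> fst H \<subseteq> fst G \<and> snd H \<subseteq> snd G"

definition induced_subgraph :: "graph \<Rightarrow> graph \<Rightarrow> bool" where
  "induced_subgraph H G \<longleftrightarrow> wf_graph H \<and> fst H \<subseteq> fst G \<and>
     snd H = {e \<in> snd G. e \<subseteq> fst H}"

definition is_class :: "graph set \<Rightarrow> bool" where
  "is_class C \<longleftrightarrow> (\<forall>G\<in>C. wf_graph G) \<and>
     (\<forall>G\<in>C. \<forall>H. wf_graph H \<and> graph_iso G H \<longrightarrow> H \<in> C)"

definition monotone_class :: "graph set \<Rightarrow> bool" where
  "monotone_class C \<longleftrightarrow> is_class C \<and> (\<forall>G\<in>C. \<forall>H. subgraph H G \<longrightarrow> H \<in> C)"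

definition hereditary_class :: "graph set \<Rightarrow> bool" where
  "hereditary_class C \<longleftrightarrow> is_class C \<and> (\<forall>G\<in>C. \<forall>H. induced_subgraph H G \<longrightarrow> H \<in> C)"

definition iso_class :: "graph \<Rightarrow> graph set" where
  "iso_class G = {H. wf_graph H \<and> graph_iso G H}"

definition unlabeled_count :: "graph set \<Rightarrow> nat \<Rightarrow> nat" where
  "unlabeled_count C n = card (iso_class ` {G \<in> C. nverts G = n})"

definition tiny_class :: "graph set \<Rightarrow> bool" where
  "tiny_class C \<longleftrightarrow> hereditary_class C \<and>
     (\<exists>\<beta>::real. \<forall>n. real (unlabeled_count C n) \<le> \<beta> ^ n)"

definition Mon :: "graph set \<Rightarrow> graph set" where
  "Mon C = \<Inter> {D. monotone_class D \<and> C \<subseteq> D}"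

definition t_sparse :: "(nat \<Rightarrow> real) \<Rightarrow> nat set \<Rightarrow> bool" where
  "t_sparse t L \<longleftrightarrow> \<not> (\<exists>x\<in>L. \<exists>y\<in>L. x \<noteq> y \<and> t y \<le> real x \<and> x \<le> y)"

definition s_sub :: "nat \<Rightarrow> graph \<Rightarrow> nat" where
  "s_sub k G = card (iso_class ` {H. subgraph H G \<and> nverts H = k})"

definition mono_tiny_graph :: "real \<Rightarrow> graph set \<Rightarrow> (nat \<Rightarrow> real) \<Rightarrow> graph \<Rightarrow> bool" where
  "mono_tiny_graph c Y t G \<longleftrightarrow>
     (\<forall>k::nat. 1 \<le> k \<and> real k \<le> t (nverts G) \<longrightarrow>
        (\<forall>H. subgraph H G \<and> nverts H = k \<longrightarrow> H \<in> Y)) \<and>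
     (\<forall>k::nat. t (nverts G) < real k \<and> k \<le> nverts G \<longrightarrow> real (s_sub k G) \<le> c ^ k)"

end

theory Submission
  imports Defs
begin


definition relab :: "(nat \<Rightarrow> nat) \<Rightarrow> graph \<Rightarrow> graph" where
  "relab g G = (g ` fst G, (\<lambda>e. g ` e) ` snd G)"

lemma doubleton_inj:
  assumes "inj_on g A" "x \<in> A" "y \<in> A" "a \<in> A" "b \<in> A" "{g x, g y} = {g a, g b}"
  shows "{x, y} = {a, b}"
proof -
  from assms(6) have "(g x = g a \<and> g y = g b) \<or> (g x = g b \<and> g y = g a)"
    by (auto simp: doubleton_eq_iff)
  then show ?thesis using assms(1-5) by (auto simp: inj_on_def)
qed

lemma relab_wf: assumes "wf_graph G" "inj_on g (fst G)"
  shows "wf_graph (relab g G)"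
  unfolding wf_graph_def
proof (intro conjI subsetI)
  show "finite (fst (relab g G))" using assms(1) unfolding wf_graph_def relab_def by simp
  fix e' assume "e' \<in> snd (relab g G)"
  then obtain e where e: "e \<in> snd G" "e' = g ` e" unfolding relab_def by auto
  then obtain a b where ab: "a \<noteq> b" "a \<in> fst G" "b \<in> fst G" "e = {a, b}"
    using assms(1) unfolding wf_graph_def by blast
  have "g a \<noteq> g b" using ab assms(2) unfolding inj_on_def by blast
  moreover have "g a \<in> fst (relab g G)" "g b \<in> fst (relab g G)" using ab unfolding relab_def by auto
  moreover have "e' = {g a, g b}" using e ab by simp
  ultimately show "e' \<in> {e. \<exists>x y. x \<noteq> y \<and> x \<in> fst (relab g G) \<and> y \<in> fst (relab g G) \<and> e = {x, y}}"
    by blast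
qed

lemma relab_iso: assumes "wf_graph G" "inj_on g (fst G)"
  shows "graph_iso G (relab g G)"
  unfolding graph_iso_def
proof (intro exI conjI ballI)
  show "bij_betw g (fst G) (fst (relab g G))" using assms(2) by (simp add: relab_def bij_betw_def)
  fix x y assume xy: "x \<in> fst G" "y \<in> fst G"
  show "({x, y} \<in> snd G) = ({g x, g y} \<in> snd (relab g G))"
  proof
    assume "{x, y} \<in> snd G" then show "{g x, g y} \<in> snd (relab g G)"
      unfolding relab_def by (metis image_empty image_insert image_eqI snd_conv)
  next
    assume "{g x, g y} \<in> snd (relab g G)"
    then obtain e where e: "e \<in> snd G" "{g x, g y} = g ` e" unfolding relab_def by auto
    then obtain a b where ab: "a \<in> fst G" "b \<in> fst G" "e = {a, b}"
      using assms(1) unfolding wf_graph_def by blast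
    have "{x, y} = {a, b}" using doubleton_inj[OF assms(2) xy ab(1,2)] e(2) ab(3) by simp
    then show "{x, y} \<in> snd G" using e ab by simp
  qed
qed

lemma iso_refl: "graph_iso G G"
  unfolding graph_iso_def by (rule exI[of _ id]) auto

lemma iso_sym: assumes "graph_iso G H" shows "graph_iso H G"
proof -
  obtain f where f: "bij_betw f (fst G) (fst H)"
    "\<forall>x\<in>fst G. \<forall>y\<in>fst G. {x, y} \<in> snd G \<longleftrightarrow> {f x, f y} \<in> snd H"
    using assms unfolding graph_iso_def by blast
  let ?g = "inv_into (fst G) f"
  have b: "bij_betw ?g (fst H) (fst G)" using f(1) by (rule bij_betw_inv_into)
  have "\<forall>x\<in>fst H. \<forall>y\<in>fst H. {x, y} \<in> snd H \<longleftrightarrow> {?g x, ?g y} \<in> snd G"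
  proof (intro ballI)
    fix x y assume xy: "x \<in> fst H" "y \<in> fst H"
    have "?g x \<in> fst G" "?g y \<in> fst G" using b xy by (auto simp: bij_betw_def)
    moreover have "f (?g x) = x" "f (?g y) = y" using f(1) xy
      by (auto simp: bij_betw_def f_inv_into_f)
    ultimately show "{x, y} \<in> snd H \<longleftrightarrow> {?g x, ?g y} \<in> snd G" using f(2) by metis
  qed
  then show ?thesis using b unfolding graph_iso_def by blast
qed

lemma iso_trans: assumes "graph_iso G H" "graph_iso H K" shows "graph_iso G K"
proof -
  obtain f where f: "bij_betw f (fst G) (fst H)"
    "\<forall>x\<in>fst G. \<forall>y\<in>fst G. {x, y} \<in> snd G \<longleftrightarrow> {f x, f y} \<in> snd H"
    using assms(1) unfolding graph_iso_def by blast
  obtain g where g: "bij_betw g (fst H) (fst K)"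
    "\<forall>x\<in>fst H. \<forall>y\<in>fst H. {x, y} \<in> snd H \<longleftrightarrow> {g x, g y} \<in> snd K"
    using assms(2) unfolding graph_iso_def by blast
  have "bij_betw (g \<circ> f) (fst G) (fst K)" using f(1) g(1) by (rule bij_betw_trans)
  moreover have "\<forall>x\<in>fst G. \<forall>y\<in>fst G. {x, y} \<in> snd G \<longleftrightarrow> {(g \<circ> f) x, (g \<circ> f) y} \<in> snd K"
  proof (intro ballI)
    fix x y assume xy: "x \<in> fst G" "y \<in> fst G"
    have "f x \<in> fst H" "f y \<in> fst H" using f(1) xy by (auto simp: bij_betw_def)
    then show "{x, y} \<in> snd G \<longleftrightarrow> {(g \<circ> f) x, (g \<circ> f) y} \<in> snd K"
      using f(2) g(2) xy by simp
  qed
  ultimately show ?thesis unfolding graph_iso_def by blast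
qed

lemma iso_class_eq: "graph_iso G H \<Longrightarrow> iso_class G = iso_class H"
  unfolding iso_class_def using iso_sym iso_trans by blast

lemma iso_nverts: "graph_iso G H \<Longrightarrow> nverts G = nverts H"
  unfolding graph_iso_def nverts_def using bij_betw_same_card by blast

lemma transport:
  assumes "graph_iso G H" "subgraph H' G"
  shows "\<exists>H''. subgraph H'' H \<and> graph_iso H' H''"
proof -
  obtain f where f: "bij_betw f (fst G) (fst H)"
    "\<forall>x\<in>fst G. \<forall>y\<in>fst G. {x, y} \<in> snd G \<longleftrightarrow> {f x, f y} \<in> snd H"
    using assms(1) unfolding graph_iso_def by blast
  have wf: "wf_graph H'" and sub: "fst H' \<subseteq> fst G" "snd H' \<subseteq> snd G"
    using assms(2) unfolding subgraph_def by auto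
  have inj: "inj_on f (fst H')" using f(1) sub(1) by (auto simp: bij_betw_def inj_on_def)
  have "subgraph (relab f H') H"
    unfolding subgraph_def
  proof (intro conjI)
    show "wf_graph (relab f H')" using relab_wf[OF wf inj] .
    show "fst (relab f H') \<subseteq> fst H" using f(1) sub(1) by (auto simp: relab_def bij_betw_def)
    show "snd (relab f H') \<subseteq> snd H"
    proof
      fix e' assume "e' \<in> snd (relab f H')"
      then obtain e where e: "e \<in> snd H'" "e' = f ` e" unfolding relab_def by auto
      then obtain a b where ab: "a \<in> fst H'" "b \<in> fst H'" "e = {a, b}"
        using wf unfolding wf_graph_def by blast
      have "{a, b} \<in> snd G" using e ab sub by auto
      then have "{f a, f b} \<in> snd H" using f(2) ab sub by blast
      then show "e' \<in> snd H" using e ab by simp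
    qed
  qed
  then show ?thesis using relab_iso[OF wf inj] by blast
qed

lemma finite_isoclasses: "finite (iso_class ` {G. wf_graph G \<and> nverts G = n})"
proof -
  let ?S = "{{0..<n}} \<times> Pow (Pow {0..<n})"
  have finS: "finite ?S" by (intro finite_cartesian_product finite_Pow_iff[THEN iffD2]) simp_all
  have "iso_class ` {G. wf_graph G \<and> nverts G = n} \<subseteq> iso_class ` ?S"
  proof
    fix X assume "X \<in> iso_class ` {G. wf_graph G \<and> nverts G = n}"
    then obtain G where G0: "G \<in> {G. wf_graph G \<and> nverts G = n}" and G3: "X = iso_class G"
      by (rule imageE)
    have G: "wf_graph G" "nverts G = n" "X = iso_class G" using G0 G3 by simp_all
    have fin: "finite (fst G)" using G(1) unfolding wf_graph_def by blast
    have cn: "card (fst G) = n" using G(2) unfolding nverts_def .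
    obtain h where h: "bij_betw h (fst G) {0..<n}"
      using ex_bij_betw_finite_nat[OF fin] unfolding cn by blast
    have inj: "inj_on h (fst G)" using h by (simp add: bij_betw_def)
    have f1: "fst (relab h G) = {0..<n}" using h by (simp add: relab_def bij_betw_def)
    have "snd (relab h G) \<subseteq> Pow {0..<n}"
    proof
      fix e' assume "e' \<in> snd (relab h G)"
      then obtain e where e: "e \<in> snd G" "e' = h ` e" unfolding relab_def by auto
      obtain a b where ab: "a \<in> fst G" "b \<in> fst G" "e = {a, b}"
        using e(1) G(1) unfolding wf_graph_def by blast
      have "e \<subseteq> fst G" using ab by simp
      then have "e' \<subseteq> h ` fst G" using e(2) by blast
      then show "e' \<in> Pow {0..<n}" using h by (simp add: bij_betw_def)
    qed
    then have s1: "snd (relab h G) \<in> Pow (Pow {0..<n})" by (rule PowI)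
    have f1': "fst (relab h G) \<in> {{0..<n}}" using f1 by (simp only: singleton_iff)
    have rS: "relab h G \<in> ?S" unfolding mem_Times_iff using f1' s1 by (rule conjI)
    have XE: "X = iso_class (relab h G)"
      using G(3) iso_class_eq[OF relab_iso[OF G(1) inj]] by simp
    show "X \<in> iso_class ` ?S" using XE rS by (rule image_eqI)
  qed
  moreover have "finite (iso_class ` ?S)" using finS by (rule finite_imageI)
  ultimately show ?thesis by (rule finite_subset)
qed



lemma subgraph_trans: "subgraph A B \<Longrightarrow> subgraph B C \<Longrightarrow> subgraph A C"
  unfolding subgraph_def by auto

lemma subgraph_refl: "wf_graph G \<Longrightarrow> subgraph G G"
  unfolding subgraph_def by auto

definition SubC :: "graph set \<Rightarrow> graph set" where
  "SubC C = {G. wf_graph G \<and> (\<exists>G0\<in>C. \<exists>H. subgraph H G0 \<and> graph_iso H G)}"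

lemma SubC_props: assumes "\<forall>G\<in>C. wf_graph G"
  shows "monotone_class (SubC C) \<and> C \<subseteq> SubC C"
proof (intro conjI)
  show "C \<subseteq> SubC C" using assms subgraph_refl iso_refl unfolding SubC_def by blast
  have cl: "is_class (SubC C)"
    unfolding is_class_def SubC_def using iso_trans by blast
  moreover have "\<forall>G\<in>SubC C. \<forall>H. subgraph H G \<longrightarrow> H \<in> SubC C"
  proof (intro ballI allI impI)
    fix G H assume G: "G \<in> SubC C" and H: "subgraph H G"
    then obtain G0 K where K: "G0 \<in> C" "subgraph K G0" "graph_iso K G" unfolding SubC_def by blast
    obtain H'' where H'': "subgraph H'' K" "graph_iso H H''"
      using transport[OF iso_sym[OF K(3)] H] by blast
    have "wf_graph H" using H unfolding subgraph_def by blast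
    moreover have "subgraph H'' G0" using subgraph_trans[OF H''(1) K(2)] .
    moreover have "graph_iso H'' H" using iso_sym[OF H''(2)] .
    ultimately show "H \<in> SubC C" using K(1) unfolding SubC_def by blast
  qed
  ultimately show "monotone_class (SubC C)" unfolding monotone_class_def by blast
qed

lemma Mon_props: assumes "\<forall>G\<in>C. wf_graph G"
  shows "monotone_class (Mon C) \<and> Mon C \<subseteq> SubC C"
proof -
  have S: "SubC C \<in> {D. monotone_class D \<and> C \<subseteq> D}" using SubC_props[OF assms] by blast
  have sub: "Mon C \<subseteq> SubC C" unfolding Mon_def using S by blast
  have "is_class (Mon C)"
    unfolding is_class_def
  proof (intro conjI ballI allI impI)
    fix G assume "G \<in> Mon C" then show "wf_graph G" using sub unfolding SubC_def by blast
  next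
    fix G H assume "G \<in> Mon C" "wf_graph H \<and> graph_iso G H"
    then show "H \<in> Mon C" unfolding Mon_def monotone_class_def is_class_def by blast
  qed
  moreover have "\<forall>G\<in>Mon C. \<forall>H. subgraph H G \<longrightarrow> H \<in> Mon C"
    unfolding Mon_def monotone_class_def by blast
  ultimately show ?thesis using sub unfolding monotone_class_def by blast
qed

lemma pow_add_le:
  fixes a b :: real assumes "a \<ge> 0" "b \<ge> 0" "n \<ge> 1"
  shows "a ^ n + b ^ n \<le> (a + b) ^ n"
  using assms(3)
proof (induction n rule: dec_induct)
  case base then show ?case by simp
next
  case (step m)
  have "a ^ Suc m + b ^ Suc m \<le> (a + b) * (a ^ m + b ^ m)"
    using assms by (simp add: algebra_simps)
  also have "\<dots> \<le> (a + b) * (a + b) ^ m"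
    using step.IH assms by (intro mult_left_mono) auto
  finally show ?case by simp
qed

lemma powr_bound:
  fixes \<gamma> a t0 :: real and n :: nat
  assumes "t0 \<le> a" "a \<le> real n"
  shows "\<gamma> powr a \<le> exp (\<bar>ln \<gamma>\<bar> * \<bar>t0\<bar>) * exp \<bar>ln \<gamma>\<bar> ^ n"
proof (cases "\<gamma> = 0")
  case True then show ?thesis by simp
next
  case False
  have "\<bar>a\<bar> \<le> \<bar>t0\<bar> + real n" using assms by linarith
  have h1: "a * ln \<gamma> \<le> \<bar>a\<bar> * \<bar>ln \<gamma>\<bar>"
    by (metis abs_ge_self abs_mult)
  have h2: "\<bar>a\<bar> * \<bar>ln \<gamma>\<bar> \<le> (\<bar>t0\<bar> + real n) * \<bar>ln \<gamma>\<bar>"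
    using \<open>\<bar>a\<bar> \<le> \<bar>t0\<bar> + real n\<close> by (rule mult_right_mono) simp
  have h3: "(\<bar>t0\<bar> + real n) * \<bar>ln \<gamma>\<bar> = \<bar>ln \<gamma>\<bar> * \<bar>t0\<bar> + real n * \<bar>ln \<gamma>\<bar>"
    by (simp add: algebra_simps)
  have "a * ln \<gamma> \<le> \<bar>ln \<gamma>\<bar> * \<bar>t0\<bar> + real n * \<bar>ln \<gamma>\<bar>"
    using h1 h2 h3 by linarith
  then have "exp (a * ln \<gamma>) \<le> exp (\<bar>ln \<gamma>\<bar> * \<bar>t0\<bar> + real n * \<bar>ln \<gamma>\<bar>)" by simp
  also have "\<dots> = exp (\<bar>ln \<gamma>\<bar> * \<bar>t0\<bar>) * exp \<bar>ln \<gamma>\<bar> ^ n"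
    by (simp add: exp_add exp_of_nat_mult)
  finally show ?thesis using False by (simp add: powr_def)
qed

lemma induced_sub: "induced_subgraph H G \<Longrightarrow> subgraph H G"
  unfolding induced_subgraph_def subgraph_def by auto



theorem mainTheorem14:
  fixes c \<gamma> :: real and Y :: "graph set" and t :: "nat \<Rightarrow> real"
    and L :: "nat set" and M :: "nat \<Rightarrow> graph set"
  assumes "tiny_class Y"
    and "mono t" and "\<forall>B. \<exists>n. t n > B" and "\<forall>n. t n \<le> real n"
    and "infinite L" and "t_sparse t L"
    and "\<forall>l\<in>L. \<forall>G\<in>M l. wf_graph G \<and> nverts G = l \<and> mono_tiny_graph c Y t G"
    and "\<forall>l\<in>L. finite (M l) \<and> real (card (M l)) \<le> \<gamma> powr t l"
  shows "monotone_class (Mon (\<Union>l\<in>L. M l)) \<and> tiny_class (Mon (\<Union>l\<in>L. M l))"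
proof -
  define C where "C = (\<Union>l\<in>L. M l)"
  have hC: "\<forall>G\<in>C. wf_graph G" using assms(7) unfolding C_def by blast
  note MP = Mon_props[OF hC]
  have mon: "monotone_class (Mon C)" using MP by blast
  have her: "hereditary_class (Mon C)"
    using mon induced_sub unfolding monotone_class_def hereditary_class_def by blast
  obtain \<beta> where \<beta>: "\<forall>n. real (unlabeled_count Y n) \<le> \<beta> ^ n"
    using assms(1) unfolding tiny_class_def by blast
  have Ywf: "\<forall>G\<in>Y. wf_graph G"
    using assms(1) unfolding tiny_class_def hereditary_class_def is_class_def by blast
  define B where "B = \<bar>\<beta>\<bar>"
  define K where "K = exp (\<bar>ln \<gamma>\<bar> * \<bar>t 0\<bar>)"
  define D where "D = exp \<bar>ln \<gamma>\<bar>"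
  define c' where "c' = \<bar>c\<bar>"
  have K1: "K \<ge> 1" unfolding K_def by simp
  have D1: "D \<ge> 1" unfolding D_def by simp
  have c'0: "c' \<ge> 0" unfolding c'_def by simp
  have B0: "B \<ge> 0" unfolding B_def by simp
  have cnt: "real (unlabeled_count (Mon C) n) \<le> (B + K * D * c') ^ n" for n
  proof (cases "n = 0")
    case True
    have "{G \<in> Mon C. nverts G = n} \<subseteq> {({}, {})}"
    proof
      fix G assume G: "G \<in> {G \<in> Mon C. nverts G = n}"
      then have "wf_graph G" using mon unfolding monotone_class_def is_class_def by blast
      moreover have "card (fst G) = 0" using G True unfolding nverts_def by simp
      ultimately have "fst G = {}" "snd G = {}" unfolding wf_graph_def by auto
      then show "G \<in> {({}, {})}" by (cases G) auto
    qed
    then have "iso_class ` {G \<in> Mon C. nverts G = n} \<subseteq> {iso_class ({}, {})}" by blast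
    then have "card (iso_class ` {G \<in> Mon C. nverts G = n}) \<le> 1"
      using card_mono[of "{iso_class ({}, {})}"] by fastforce
    then show ?thesis using True unfolding unlabeled_count_def by simp
  next
    case False
    then have n1: "n \<ge> 1" by simp
    define A where "A = {G \<in> Mon C. nverts G = n}"
    define YS where "YS = iso_class ` {G \<in> Y. nverts G = n}"
    define P where "P = {l \<in> L. t l < real n \<and> n \<le> l}"
    define S where "S = (\<lambda>G0. iso_class ` {H. subgraph H G0 \<and> nverts H = n})"
    define R where "R = YS \<union> (\<Union>l\<in>P. \<Union>G0\<in>M l. S G0)"
    have incl: "iso_class ` A \<subseteq> R"
    proof
      fix X assume "X \<in> iso_class ` A"
      then obtain G where G: "G \<in> Mon C" "nverts G = n" "X = iso_class G" unfolding A_def by blast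
      then have "G \<in> SubC C" using MP by blast
      then obtain G0 H where H: "G0 \<in> C" "subgraph H G0" "graph_iso H G" unfolding SubC_def by blast
      obtain l where l: "l \<in> L" "G0 \<in> M l" using H(1) unfolding C_def by blast
      have G0: "wf_graph G0" "nverts G0 = l" "mono_tiny_graph c Y t G0" using assms(7) l by auto
      have Hn: "nverts H = n" using iso_nverts[OF H(3)] G(2) by simp
      have XH: "X = iso_class H" using G(3) iso_class_eq[OF H(3)] by simp
      have nl: "n \<le> l"
      proof -
        have "fst H \<subseteq> fst G0" "finite (fst G0)" using H(2) G0(1)
          unfolding subgraph_def wf_graph_def by auto
        then have "card (fst H) \<le> card (fst G0)" using card_mono by blast
        then show ?thesis using Hn G0(2) unfolding nverts_def by simp
      qed
      show "X \<in> R"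
      proof (cases "real n \<le> t l")
        case True
        have m1: "\<forall>k. 1 \<le> k \<and> real k \<le> t (nverts G0) \<longrightarrow> (\<forall>H. subgraph H G0 \<and> nverts H = k \<longrightarrow> H \<in> Y)"
          using G0(3) unfolding mono_tiny_graph_def by (rule conjunct1)
        have "H \<in> Y" using m1 True n1 H(2) Hn G0(2) by blast
        then show ?thesis using XH Hn unfolding R_def YS_def by blast
      next
        case False
        then have "l \<in> P" using l nl unfolding P_def by simp
        then show ?thesis using XH Hn H(2) l(2) unfolding R_def S_def by blast
      qed
    qed
    have R1: "YS \<subseteq> iso_class ` {G. wf_graph G \<and> nverts G = n}"
      unfolding YS_def using Ywf by (intro image_mono) blast
    have R2: "S G0 \<subseteq> iso_class ` {G. wf_graph G \<and> nverts G = n}" for G0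
      unfolding S_def subgraph_def by (intro image_mono) blast
    have Rsub: "R \<subseteq> iso_class ` {G. wf_graph G \<and> nverts G = n}"
      unfolding R_def using R1 R2 by blast
    have finR: "finite R" using finite_subset[OF Rsub finite_isoclasses] .
    have uniq: "l1 = l2" if "l1 \<in> P" "l2 \<in> P" for l1 l2
    proof (rule ccontr)
      assume ne: "l1 \<noteq> l2"
      have key: "False" if "x \<in> P" "y \<in> P" "x < y" for x y
      proof -
        have "t y \<le> real x" using that unfolding P_def by auto
        moreover have "x \<in> L" "y \<in> L" "x \<noteq> y" "x \<le> y" using that unfolding P_def by auto
        ultimately show False using assms(6) unfolding t_sparse_def by blast
      qed
      show False using ne key[OF that] key[OF that(2,1)] by linarith
    qed
    have finP: "finite P"
    proof (cases "P = {}")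
      case False
      then obtain l0 where "l0 \<in> P" by blast
      then have "P \<subseteq> {l0}" using uniq by blast
      then show ?thesis using finite_subset by blast
    qed simp
    have "card P \<le> Suc 0" using card_le_Suc0_iff_eq[OF finP] uniq by blast
    then have cardP: "card P \<le> 1" by simp
    have finM: "finite (M l)" if "l \<in> P" for l using assms(8) that unfolding P_def by blast
    have YSb: "real (card YS) \<le> B ^ n"
    proof -
      have "real (card YS) \<le> \<beta> ^ n" using \<beta> unfolding unlabeled_count_def YS_def by blast
      also have "\<dots> \<le> B ^ n" unfolding B_def using abs_ge_self[of "\<beta> ^ n"] by (simp add: power_abs)
      finally show ?thesis .
    qed
    have Sb: "real (card (S G0)) \<le> c' ^ n" if "l \<in> P" "G0 \<in> M l" for l G0
    proof -
      have "wf_graph G0 \<and> nverts G0 = l \<and> mono_tiny_graph c Y t G0"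
        using assms(7) that unfolding P_def by blast
      moreover have "t l < real n" "n \<le> l" using that unfolding P_def by auto
      ultimately have m2: "\<forall>k. t (nverts G0) < real k \<and> k \<le> nverts G0 \<longrightarrow> real (s_sub k G0) \<le> c ^ k"
        and "nverts G0 = l" unfolding mono_tiny_graph_def by blast+
      have "real (s_sub n G0) \<le> c ^ n" using m2 \<open>nverts G0 = l\<close> \<open>t l < real n\<close> \<open>n \<le> l\<close> by blast
      also have "\<dots> \<le> c' ^ n" unfolding c'_def using abs_ge_self[of "c ^ n"] by (simp add: power_abs)
      finally show ?thesis unfolding s_sub_def S_def .
    qed
    have Mb: "real (card (M l)) \<le> K * D ^ n" if "l \<in> P" for l
    proof -
      have "l \<in> L" "t l < real n" using that unfolding P_def by auto
      moreover have "t 0 \<le> t l" using assms(2) by (simp add: monoD)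
      moreover have "real (card (M l)) \<le> \<gamma> powr t l" using assms(8) \<open>l \<in> L\<close> by blast
      ultimately show ?thesis using powr_bound[of "t 0" "t l" n \<gamma>]
        unfolding K_def D_def by linarith
    qed
    have "real (card (\<Union>l\<in>P. \<Union>G0\<in>M l. S G0)) \<le> real (\<Sum>l\<in>P. \<Sum>G0\<in>M l. card (S G0))"
    proof -
      have "card (\<Union>l\<in>P. \<Union>G0\<in>M l. S G0) \<le> (\<Sum>l\<in>P. card (\<Union>G0\<in>M l. S G0))"
        using card_UN_le[OF finP] by blast
      also have "\<dots> \<le> (\<Sum>l\<in>P. \<Sum>G0\<in>M l. card (S G0))"
        using card_UN_le finM by (intro sum_mono) blast
      finally show ?thesis by (simp only: of_nat_le_iff)
    qed
    also have "\<dots> = (\<Sum>l\<in>P. \<Sum>G0\<in>M l. real (card (S G0)))" by simp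
    also have "\<dots> \<le> (\<Sum>l\<in>P. \<Sum>G0\<in>M l. c' ^ n)"
      using Sb by (intro sum_mono) blast
    also have "\<dots> = (\<Sum>l\<in>P. real (card (M l)) * c' ^ n)" by simp
    also have "\<dots> \<le> (\<Sum>l\<in>P. K * D ^ n * c' ^ n)"
      using Mb c'0 by (intro sum_mono mult_right_mono) auto
    also have "\<dots> = real (card P) * (K * D ^ n * c' ^ n)" by simp
    also have "\<dots> \<le> 1 * (K * D ^ n * c' ^ n)"
      using cardP K1 D1 c'0 by (intro mult_right_mono) auto
    also have "\<dots> \<le> (K * D * c') ^ n"
    proof -
      have "K ^ 1 \<le> K ^ n" using power_increasing[OF n1 K1] .
      then have "K \<le> K ^ n" by simp
      then have "K * (D ^ n * c' ^ n) \<le> K ^ n * (D ^ n * c' ^ n)"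
        using D1 c'0 by (intro mult_right_mono) auto
      then show ?thesis by (simp add: power_mult_distrib mult.assoc)
    qed
    finally have U: "real (card (\<Union>l\<in>P. \<Union>G0\<in>M l. S G0)) \<le> (K * D * c') ^ n" .
    have "card (iso_class ` A) \<le> card R" using card_mono[OF finR incl] .
    also have "\<dots> \<le> card YS + card (\<Union>l\<in>P. \<Union>G0\<in>M l. S G0)" unfolding R_def by (rule card_Un_le)
    finally have "real (card (iso_class ` A)) \<le> B ^ n + (K * D * c') ^ n"
      using YSb U by linarith
    also have "\<dots> \<le> (B + K * D * c') ^ n"
      using B0 K1 D1 c'0 n1 by (intro pow_add_le) auto
    finally show ?thesis unfolding unlabeled_count_def A_def .
  qed
  have "tiny_class (Mon C)" unfolding tiny_class_def using her cnt by blast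
  then show ?thesis using mon unfolding C_def by blast
qed

end
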